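(* Consider the oceanic model with threshold $h>0$ under the Shapley value reward sharing scheme. Fix $\varepsilon>0$ and atomic players $1,\dots,n$ whose stakes all satisfy $a_i\in(h/4,h)$. Then there exists $L_0$ (depending on $\varepsilon$ and on the total stake of the atomic players) such that whenever the total mass $L$ of non-atomic players satisfies $L\ge L_0$, the Price of Stability of the resulting game is at most $4/3+\varepsilon$.
   Context: Oceanic model: there is a finite set $N_a=\{1,\dots,n\}$ of atomic players, player $i$ having stake $a_i>0$, and a continuum $N_s$ of non-atomic players of total mass $L\ge 0$ (identified with $[0,L]$; a measurable set of non-atomic players contributes stake equal to its Lebesgue measure). A threshold $h>0$ is fixed and it is assumed that $a_i<h$ for every atomic player. Each player either opens her own pool or joins a pool opened by another player; the pools form a partition $\Pi$ of all players. For a pool $S$ let $m(S)=|S\cap N_s|+\sum_{i\in S\cap N_a}a_i$; its reward is $\rho(S)=1$ if $m(S)\ge h$ (a winning pool) and $\rho(S)=0$ otherwise. A reward sharing scheme splits $\rho(S)$ among the members of $S$: each atomic member receives a payment, and the remainder is shared equally per unit of stake among the non-atomic members. Utility = payment received. A partition $\Pi$ of all players into winning pools is a Nash equilibrium if no atomic player can strictly increase her payment by moving to another pool of $\Pi$ or opening a new pool alone, and no non-atomic player can strictly increase her reward per unit of stake by moving to another pool of $\Pi$ (a non-atomic player is infinitesimal, so her move does not change the per-unit reward of the pool she joins). $OPT(G)$ is the maximum number $t$ such that the players can be partitioned into $t$ pools each of stake at least $h$; for a partition $\Pi$, $W(\Pi)$ is its number of winning pools; the Price of Stability is $\min_{\Pi}OPT(G)/W(\Pi)$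 over all Nash equilibrium partitions $\Pi$. Shapley scheme (oceanic): in a pool $S$ with non-atomic mass $k>0$ and atomic members with stakes $b_1,\dots,b_t$, let $L_1,\dots,L_t$ be i.i.d. uniform on $[0,k]$ and $P(i)=\{j\ne i: L_j<L_i\}$; atomic member $i$ receives $\Pr\big[\sum_{j\in P(i)}b_j+L_i<h\le\sum_{j\in P(i)}b_j+L_i+b_i\big]$, and the remaining reward is shared equally per unit of stake among the non-atomic members. If $k=0$, atomic members receive the standard Shapley value $\phi_i(S)=\sum_{T\subseteq S\setminus\{i\}}\frac{|T|!(|S|-|T|-1)!}{|S|!}(\rho(T\cup\{i\})-\rho(T))$. *)

theory Defs
  imports "HOL-Probability.Probability"
begin

(* Atomic players are 1..n with stakes a i; the non-atomic
   players form a continuum of total mass L.  Since non-atomic players are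
   identical and only the Lebesgue measure of the set of non-atomic players in
   a pool matters, a pool is represented by a pair (A, k): the set A of its
   atomic members and the mass k >= 0 of its non-atomic members. *)

type_synonym pool = "nat set \<times> real"

definition stake :: "(nat \<Rightarrow> real) \<Rightarrow> pool \<Rightarrow> real" where
  "stake a P = snd P + (\<Sum>i\<in>fst P. a i)"

definition pool_reward :: "real \<Rightarrow> (nat \<Rightarrow> real) \<Rightarrow> pool \<Rightarrow> real" where
  "pool_reward h a P = (if stake a P \<ge> h then 1 else 0)"

definition winning :: "real \<Rightarrow> (nat \<Rightarrow> real) \<Rightarrow> pool \<Rightarrow> bool" where
  "winning h a P \<longleftrightarrow> stake a P \<ge> h"

definition is_partition :: "nat \<Rightarrow> real \<Rightarrow> pool list \<Rightarrow> bool" where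
  "is_partition n L Ps \<longleftrightarrow>
     (\<forall>j<length Ps. fst (Ps!j) \<subseteq> {1..n} \<and> snd (Ps!j) \<ge> 0 \<and>
                      (fst (Ps!j) \<noteq> {} \<or> snd (Ps!j) > 0)) \<and>
     (\<forall>i<length Ps. \<forall>j<length Ps. i \<noteq> j \<longrightarrow> fst (Ps!i) \<inter> fst (Ps!j) = {}) \<and>
     (\<Union>j<length Ps. fst (Ps!j)) = {1..n} \<and>
     (\<Sum>j<length Ps. snd (Ps!j)) = L"

definition rho_atomic :: "real \<Rightarrow> (nat \<Rightarrow> real) \<Rightarrow> nat set \<Rightarrow> real" where
  "rho_atomic h a T = (if (\<Sum>j\<in>T. a j) \<ge> h then 1 else 0)"

definition std_shapley :: "real \<Rightarrow> (nat \<Rightarrow> real) \<Rightarrow> nat set \<Rightarrow> nat \<Rightarrow> real" where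
  "std_shapley h a A i =
     (\<Sum>T\<in>Pow (A - {i}). fact (card T) * fact (card A - card T - 1) / fact (card A)
          * (rho_atomic h a (T \<union> {i}) - rho_atomic h a T))"

definition unif_positions :: "nat set \<Rightarrow> real \<Rightarrow> (nat \<Rightarrow> real) measure" where
  "unif_positions A k = PiM A (\<lambda>_. uniform_measure lborel {0..k})"

definition ocean_shapley :: "real \<Rightarrow> (nat \<Rightarrow> real) \<Rightarrow> pool \<Rightarrow> nat \<Rightarrow> real" where
  "ocean_shapley h a P i =
     (if snd P > 0 then
        measure (unif_positions (fst P) (snd P))
          {x \<in> space (unif_positions (fst P) (snd P)).
             (\<Sum>j\<in>{j\<in>fst P - {i}. x j < x i}. a j) + x i < h \<and>
             h \<le> (\<Sum>j\<in>{j\<in>fst P - {i}. x j < x i}. a j) + x i + a i}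
      else std_shapley h a (fst P) i)"

(* reward per unit of stake of the non-atomic members of pool P
   (the remainder after paying the atomic members, divided by the mass;
    for a pool without non-atomic mass this is 0 by the convention x/0 = 0) *)
definition nonatomic_unit :: "real \<Rightarrow> (nat \<Rightarrow> real) \<Rightarrow> pool \<Rightarrow> real" where
  "nonatomic_unit h a P =
     (pool_reward h a P - (\<Sum>i\<in>fst P. ocean_shapley h a P i)) / snd P"

definition shapley_NE :: "real \<Rightarrow> nat \<Rightarrow> (nat \<Rightarrow> real) \<Rightarrow> real \<Rightarrow> pool list \<Rightarrow> bool" where
  "shapley_NE h n a L Ps \<longleftrightarrow>
     is_partition n L Ps \<and>
     (\<forall>p<length Ps. winning h a (Ps!p)) \<and>
     (\<forall>p<length Ps. \<forall>i\<in>fst (Ps!p).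
        (\<forall>q<length Ps. q \<noteq> p \<longrightarrow>
           ocean_shapley h a (insert i (fst (Ps!q)), snd (Ps!q)) i \<le> ocean_shapley h a (Ps!p) i) \<and>
        ocean_shapley h a ({i}, 0) i \<le> ocean_shapley h a (Ps!p) i) \<and>
     (\<forall>p<length Ps. snd (Ps!p) > 0 \<longrightarrow>
        (\<forall>q<length Ps. q \<noteq> p \<longrightarrow> nonatomic_unit h a (Ps!q) \<le> nonatomic_unit h a (Ps!p)))"

definition OPT :: "real \<Rightarrow> nat \<Rightarrow> (nat \<Rightarrow> real) \<Rightarrow> real \<Rightarrow> nat" where
  "OPT h n a L = Max {t. \<exists>Ps. is_partition n L Ps \<and> length Ps = t \<and> (\<forall>P\<in>set Ps. stake a P \<ge> h)}"

definition num_winning :: "real \<Rightarrow> (nat \<Rightarrow> real) \<Rightarrow> pool list \<Rightarrow> nat" where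
  "num_winning h a Ps = length (filter (winning h a) Ps)"

definition price_of_stability :: "real \<Rightarrow> nat \<Rightarrow> (nat \<Rightarrow> real) \<Rightarrow> real \<Rightarrow> real" where
  "price_of_stability h n a L =
     Inf {real (OPT h n a L) / real (num_winning h a Ps) | Ps. shapley_NE h n a L Ps}"

end

theory Submission
  imports Defs
begin


definition kk :: "real \<Rightarrow> real \<Rightarrow> real" where
  "kk m x = (if m*(1-x) \<le> 1 then sqrt (m*(1-x)) else (m + sqrt (m^2 - 4*m*x))/2)"

lemma kk_props:
  assumes m: "4/3 \<le> m" "m \<le> 2" and x: "0 < x" "x < 1"
  shows "0 < kk m x" "(kk m x)^2 = m * (max (kk m x) 1 - x)" "1 \<le> kk m x + x"
    "kk m x \<le> 1 \<longleftrightarrow> m*(1-x) \<le> 1"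
proof -
  have "0 < kk m x \<and> (kk m x)^2 = m * (max (kk m x) 1 - x) \<and> 1 \<le> kk m x + x \<and> (kk m x \<le> 1 \<longleftrightarrow> m*(1-x) \<le> 1)"
  proof (cases "m*(1-x) \<le> 1")
    case True
    have k: "kk m x = sqrt (m*(1-x))" using True by (simp add: kk_def)
    have pos: "0 < m*(1-x)" using m x by simp
    have le1: "sqrt (m*(1-x)) \<le> 1" using True by simp
    have "(1-x)^2 \<le> m*(1-x)" using m x by (simp add: power2_eq_square mult_right_mono)
    hence "1 - x \<le> sqrt (m*(1-x))" using x by (metis real_le_rsqrt)
    thus ?thesis using k pos le1 True by (simp add: max_def)
  next
    case False
    have k: "kk m x = (m + sqrt (m^2 - 4*m*x))/2" using False by (simp add: kk_def)
    have D: "(2-m)^2 \<le> m^2 - 4*m*x" using False by (simp add: power2_eq_square algebra_simps)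
    hence Dp: "0 \<le> m^2 - 4*m*x" by (metis order.trans zero_le_power2)
    have "2 - m \<le> sqrt (m^2 - 4*m*x)" using D real_le_rsqrt by blast
    hence ge1: "1 \<le> kk m x" using k by simp
    have sq: "(sqrt (m^2 - 4*m*x))^2 = m^2 - 4*m*x" using Dp by simp
    have eq: "(kk m x)^2 = m * (kk m x - x)"
      unfolding k using sq by (simp add: power2_eq_square field_simps)
    moreover have "kk m x \<noteq> 1"
    proof
      assume "kk m x = 1"
      with \<open>(kk m x)^2 = m * (kk m x - x)\<close> have "1 = m*(1-x)" by simp
      with False show False by simp
    qed
    ultimately show ?thesis using ge1 False m x by (simp add: max_def)
  qed
  thus "0 < kk m x" "(kk m x)^2 = m * (max (kk m x) 1 - x)" "1 \<le> kk m x + x"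
    "kk m x \<le> 1 \<longleftrightarrow> m*(1-x) \<le> 1" by auto
qed

lemma kk_plateau:
  assumes m: "4/3 \<le> m" "m \<le> 2" and x: "0 < x" "x < 1"
  shows "kk m x + x \<le> m"
proof -
  note P = kk_props[OF m x]
  define k where "k = kk m x"
  show ?thesis
  proof (cases "k \<le> 1")
    case True
    hence "k^2 = m*(1-x)" using P(2) k_def by (simp add: max_def)
    hence xe: "x = 1 - k^2/m" using m by (simp add: field_simps)
    have "0 \<le> (k - m/2)^2 + (3*m/4 - 1)*m" using m by simp
    hence "k + 1 - k^2/m \<le> m" using m by (simp add: field_simps power2_eq_square)
    thus ?thesis unfolding k_def[symmetric] using xe by linarith
  next
    case False
    hence "k^2 = m*(k-x)" using P(2) k_def by (simp add: max_def)
    hence xe: "x = k - k^2/m" using m by (simp add: field_simps)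
    have "0 \<le> (m - k)^2" by simp
    hence "2*k - k^2/m \<le> m" using m by (simp add: field_simps power2_eq_square)
    thus ?thesis unfolding k_def[symmetric] using xe by linarith
  qed
qed

lemma kk_le:
  assumes m: "4/3 \<le> m" "m \<le> 2" and x: "0 < x" "x < 1"
    and K: "0 \<le> K" "m * (max K 1 - x) \<le> K^2"
  shows "kk m x \<le> K"
proof (rule ccontr)
  assume "\<not> kk m x \<le> K"
  hence lt: "K < kk m x" by simp
  note P = kk_props[OF m x]
  define k where "k = kk m x"
  have "K^2 - m * max K 1 < k^2 - m * max k 1"
  proof (cases "k \<le> 1")
    case True
    thus ?thesis using lt K k_def by (simp add: max_def power_strict_mono)
  next
    case False
    show ?thesis
    proof (cases "K \<le> 1")
      case True
      have "(k-1)*(k+1-m) > 0" using False m by simp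
      moreover have "K^2 \<le> 1" using True K by (simp add: power_le_one)
      ultimately show ?thesis using True False by (simp add: max_def algebra_simps power2_eq_square)
    next
      case KF: False
      have "(k-K)*(k+K-m) > 0" using lt KF False m k_def by simp
      thus ?thesis using KF False by (simp add: max_def algebra_simps power2_eq_square)
    qed
  qed
  thus False using P(2) K unfolding k_def by (simp add: right_diff_distrib)
qed

lemma z_bound:
  fixes z :: real assumes "0 \<le> z" "z^2 \<le> 3/4" shows "z \<le> 867/1000"
proof (rule ccontr)
  assume "\<not> z \<le> 867/1000"
  hence "(867/1000)^2 < z^2" by (intro power_strict_mono) auto
  thus False using assms by (simp add: power2_eq_square)
qed

lemma poly_c4_low:
  fixes y :: real assumes "0 \<le> y" "y \<le> 1/2"
  shows "0 \<le> 7/16 - 1734/1000*y + 7/4*y^2"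
proof -
  have "0 \<le> 7/4*(y - 4954/10000)^2" by simp
  thus ?thesis using assms by (simp add: power2_eq_square algebra_simps)
qed

lemma poly_c4_high:
  fixes y :: real assumes "1/2 \<le> y" "y \<le> 1"
  shows "0 \<le> 2*y^2 - y^4 - 3/4 + (1 - 867/1000*y)^2"
proof -
  define d where "d = y - 1/2"
  have y: "y = 1/2 + d" and d: "0 \<le> d" "d \<le> 1/2" using assms d_def by auto
  have d3: "2*d^3 \<le> d^2" using d mult_right_mono[of d "1/2" "d^2"] by (simp add: power2_eq_square power3_eq_cube)
  have d4: "d^4 \<le> d^2/4" using d mult_mono[of d "1/2" d "1/2"] mult_right_mono[of "d*d" "1/4" "d^2"]
    by (simp add: power2_eq_square power4_eq_xxxx)
  have "0 \<le> d^2" by simp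
  have eq: "2*y^2 - y^4 - 3/4 + (1 - 867/1000*y)^2 =
     842225/100000000 + 517689/1000000*d + 1251689/1000000 * d^2 - 2*d^3 - d^4"
    unfolding y power2_eq_square power3_eq_cube power4_eq_xxxx by (simp add: field_simps)
  show ?thesis unfolding eq using d d3 d4 \<open>0 \<le> d^2\<close> by linarith
qed

lemma poly_c4:
  fixes y z :: real
  assumes y: "0 \<le> y" "y \<le> 1" and z: "0 \<le> z" "z^2 \<le> 3/4" and yz: "z^2*(y^2+z^2) \<le> 3/4"
  shows "2*y*z \<le> 1 + 2*y^2 - y^4 - z^4"
proof -
  have zb: "z \<le> 867/1000" using z_bound z by blast
  have w: "y*z \<le> y*(867/1000)" using zb y by (intro mult_left_mono) auto
  have z4: "z^4 = z^2*z^2" by (simp add: power4_eq_xxxx power2_eq_square)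
  have y4: "y^4 = y^2*y^2" by (simp add: power4_eq_xxxx power2_eq_square)
  show ?thesis
  proof (cases "y \<le> 1/2")
    case True
    have "z^2*z^2 \<le> 3/4*(3/4)" using z by (intro mult_mono) auto
    hence a: "z^4 \<le> 9/16" unfolding z4 by simp
    have "y^2 \<le> (1/2)^2" using True y by (intro power_mono) auto
    hence "y^2*y^2 \<le> y^2 * (1/4)" using y by (intro mult_left_mono) (auto simp: power2_eq_square)
    hence b: "y^4 \<le> y^2/4" unfolding y4 by simp
    have c: "0 \<le> 7/16 - 1734/1000*y + 7/4*y^2" using poly_c4_low True y by blast
    show ?thesis using a b c w by linarith
  next
    case False
    have "z^2*(y^2+z^2) = y^2*z^2 + z^4" by algebra
    hence a: "z^4 \<le> 3/4 - y^2*z^2" using yz by linarith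
    define w where "w = y*z"
    have w0: "0 \<le> w" using y z w_def by simp
    have w1: "w \<le> 867/1000*y" using w w_def by (simp add: mult.commute)
    have "1 - 867/1000*y \<le> 1 - w" using w1 by simp
    moreover have "0 \<le> 1 - 867/1000*y" using y by simp
    ultimately have "(1 - 867/1000*y)^2 \<le> (1 - w)^2" by (intro power_mono) auto
    moreover have "0 \<le> 2*y^2 - y^4 - 3/4 + (1 - 867/1000*y)^2" using poly_c4_high False y by simp
    ultimately have c: "0 \<le> 2*y^2 - y^4 - 3/4 + (1 - w)^2" by linarith
    have "y^2*z^2 = w^2" unfolding w_def by (simp add: power_mult_distrib)
    moreover have "(1 - w)^2 = 1 - 2*w + w^2" by algebra
    ultimately have "0 \<le> 2*y^2 - y^4 - 3/4 + 1 - 2*w + y^2*z^2" using c by linarith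
    moreover have "2*y*z = 2*w" unfolding w_def by simp
    ultimately show ?thesis using a by linarith
  qed
qed

lemma c6:
  fixes a b k m :: real
  assumes m: "4/3 \<le> m" "m \<le> 27/20" and a: "1/4 < a" "a < 1"
    and k: "1 < k" "k^2 = m*(k - b)" and ab: "1 - b \<le> a"
  shows "(a*(k-b) + (a-(1-b))^2/2)/k^2 \<le> 1 - kk m a/m"
proof -
  have m0: "0 < m" using m by simp
  have bk: "b = k - k^2/m" using k m0 by (simp add: field_simps)
  have "m*(1-b) - 1 = (k-1)*(k+1-m)" unfolding bk using m0 by (simp add: field_simps power2_eq_square)
  moreover have "(k-1)*(k+1-m) \<ge> 0" using k m by simp
  ultimately have beta: "1/m \<le> 1 - b" using m0 by (simp add: field_simps)
  define d where "d = a - 1/m"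
  have d0: "a - (1-b) \<le> d" "0 \<le> a - (1-b)" using beta ab d_def by auto
  have "20/27 \<le> 1/m" using m m0 by (simp add: field_simps)
  hence d1: "d \<le> 7/27" using a d_def by simp
  have k2: "1 \<le> k^2" using k(1) by (simp add: one_le_power del: k(2))
  have "(a-(1-b))^2 \<le> d^2" using d0 by (intro power_mono) auto
  moreover have "(a-(1-b))^2/k^2 \<le> (a-(1-b))^2/1" using k2 by (intro divide_left_mono) auto
  ultimately have "(a-(1-b))^2/2/k^2 \<le> d^2/2" by simp
  moreover have "(a*(k-b) + (a-(1-b))^2/2)/k^2 = a/m + (a-(1-b))^2/2/k^2"
  proof -
    have kb: "k - b = k^2/m" using k(2) m0 by (simp add: field_simps)
    have "a*(k-b)/k^2 = a/m" unfolding kb using k(1) m0 by (simp add: field_simps)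
    thus ?thesis by (simp add: add_divide_distrib)
  qed
  ultimately have P: "(a*(k-b) + (a-(1-b))^2/2)/k^2 \<le> a/m + d^2/2" by linarith
  define T where "T = 1 - a/m - d^2/2"
  define u where "u = (m-a)/m"
  have Tu: "T = u - d^2/2" unfolding T_def u_def using m0 by (simp add: field_simps)
  have "d^2 \<le> (7/27)^2" using d1 d0 by (intro power_mono) auto
  moreover have "1/3/m \<le> u" unfolding u_def using a m m0 by (intro divide_right_mono) auto
  moreover have "1/3/(27/20) \<le> 1/3/m" using m m0 by (intro divide_left_mono) auto
  ultimately have T0: "0 \<le> T" "d^2/2 \<le> u" using Tu by (simp_all add: power2_eq_square)
  have maL: "m*(1-a) \<le> 1"
  proof -
    have "m*(1-a) \<le> m*(1 - 1/m)" using beta ab m0 by (intro mult_left_mono) auto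
    thus ?thesis using m m0 by (simp add: field_simps)
  qed
  have ka: "kk m a \<le> 1" "0 < kk m a" using kk_props[of m a] m a maL by auto
  hence ka2: "(kk m a)^2 = m*(1-a)" using kk_props(2)[of m a] m a by (simp add: max_def)
  (* key inequality m*T^2 >= 1-a *)
  have sq: "T^2 \<ge> u^2 - 2*u*(d^2/2)"
  proof -
    have "T^2 = u^2 - 2*u*(d^2/2) + (d^2/2)^2" unfolding Tu power2_diff by simp
    thus ?thesis by simp
  qed
  have amh: "d \<le> a - m/2"
  proof -
    have "m*m \<le> 2" using m mult_mono[of m "27/20" m "27/20"] by simp
    hence "m/2 \<le> 1/m" using m0 by (simp add: field_simps)
    thus ?thesis using d_def by simp
  qed
  have "(m-a)^2 - m*(1-a) = (a - m/2)^2 + (3*m/4 - 1)*m" by (simp add: power2_eq_square algebra_simps)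
  moreover have "0 \<le> (3*m/4 - 1)*m" using m by simp
  moreover have "d^2 \<le> (a - m/2)^2" using amh d0 d_def by (intro power_mono) auto
  moreover have "m*(m-a) \<le> 1"
  proof -
    have "m*(m-a) \<le> m*(m - 1/m)" using d0 d_def m0 by (intro mult_left_mono) auto
    also have "\<dots> = m*m - 1" using m0 by (simp add: field_simps)
    also have "\<dots> \<le> 1" using m mult_mono[of m "27/20" m "27/20"] by simp
    finally show ?thesis .
  qed
  moreover have "0 \<le> d^2" by simp
  moreover have "0 \<le> m*(m-a)" using m a by simp
  ultimately have "m*(m-a)*d^2 \<le> d^2" by (metis mult_left_le_one_le)
  hence key: "m*(m-a)*d^2 \<le> (m-a)^2 - m*(1-a)"
    using \<open>(m-a)^2 - m*(1-a) = (a - m/2)^2 + (3*m/4 - 1)*m\<close> \<open>0 \<le> (3*m/4 - 1)*m\<close>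
      \<open>d^2 \<le> (a - m/2)^2\<close> by linarith
  have e1: "m*m*(u^2 - 2*u*(d^2/2)) = (m-a)^2 - m*(m-a)*d^2" unfolding u_def using m0
    by (simp add: field_simps power2_eq_square)
  have "m*m*(u^2 - 2*u*(d^2/2)) \<le> m*m*T^2" using sq m0 by (intro mult_left_mono) auto
  hence "(kk m a)^2 \<le> m*m*T^2" using ka2 e1 key by linarith
  hence "(kk m a)^2 \<le> (m*T)^2" by (simp add: power_mult_distrib power2_eq_square mult_ac)
  hence "kk m a \<le> m*T" using T0 m0 by (meson power2_le_imp_le mult_nonneg_nonneg less_imp_le)
  hence "kk m a / m \<le> T" using m0 by (simp add: field_simps)
  thus ?thesis using P T_def by linarith
qed

lemma c4:
  fixes a b k m :: real
  assumes m: "4/3 \<le> m" "m \<le> 27/20" and a: "1/4 < a" "a < 1"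
    and k: "0 < k" "k \<le> 1" "k^2 = m*(1-b)" and al: "1 - a < k" and ab: "1 - b \<le> a"
  shows "((k-(1-a))^2 + (1-b)^2)/(2*k^2) \<le> 1 - kk m a/m"
proof -
  have m0: "0 < m" using m by simp
  have be: "1 - b = k^2/m" using k(3) m0 by (simp add: field_simps)
  have maL: "m*(1-a) \<le> 1"
  proof (cases "k \<le> 7/10")
    case True
    have "m*(1-a) \<le> m*k" using al m0 by simp
    also have "\<dots> \<le> 27/20*(7/10)" using True m k by (intro mult_mono) auto
    finally show ?thesis by simp
  next
    case False
    have "1 - a \<le> 1 - k^2/m" using ab be by simp
    hence "m*(1-a) \<le> m*(1 - k^2/m)" using m0 by (intro mult_left_mono) auto
    also have "\<dots> = m - k^2" using m0 by (simp add: field_simps)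
    also have "\<dots> \<le> 27/20 - (7/10)^2"
    proof -
      have "(7/10)^2 \<le> k^2" using False by (intro power_mono) auto
      thus ?thesis using m by simp
    qed
    finally show ?thesis by (simp add: power2_eq_square)
  qed
  have ka: "kk m a \<le> 1" "0 < kk m a" using kk_props[of m a] m a maL by auto
  hence ka2: "(kk m a)^2 = m*(1-a)" using kk_props(2)[of m a] m a by (simp add: max_def)
  define x where "x = (1-a)/k"
  define r where "r = k/m"
  define y where "y = sqrt x"
  define z where "z = sqrt r"
  have x0: "0 \<le> x" "x \<le> 1" unfolding x_def using a al k by (auto simp: field_simps)
  have r0: "0 \<le> r" "r \<le> 3/4" unfolding r_def using k m m0 by (auto simp: field_simps)
  have y2: "y^2 = x" unfolding y_def using x0 by simp
  have z2: "z^2 = r" unfolding z_def using r0 by simp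
  have y0: "0 \<le> y" "y \<le> 1" unfolding y_def using x0 by auto
  have z0: "0 \<le> z" unfolding z_def using r0 by auto
  have rx: "r*(x+r) = ((1-a) + (1-b))/m" unfolding r_def x_def be using k m0
    by (simp add: field_simps power2_eq_square)
  have "((1-a) + (1-b))/m \<le> 1/m" using ab m0 by (intro divide_right_mono) auto
  also have "1/m \<le> 3/4" using m m0 by (simp add: field_simps)
  finally have yz: "z^2*(y^2+z^2) \<le> 3/4" using rx y2 z2 by simp
  have pc: "2*y*z \<le> 1 + 2*y^2 - y^4 - z^4" using poly_c4[OF y0 z0 _ yz] z2 r0 by simp
  have y4: "y^4 = x^2" using y2 by (metis power_mult numeral_Bit0 power2_eq_square mult_2 numeral_One) 
  have z4: "z^4 = r^2" using z2 by (metis power_mult numeral_Bit0 power2_eq_square mult_2 numeral_One)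
  define P where "P = ((k-(1-a))^2 + (1-b)^2)/(2*k^2)"
  have Pe: "P = ((1-x)^2 + r^2)/2" unfolding P_def x_def r_def be using k m0
    by (simp add: field_simps power2_eq_square)
  have "y*z \<le> 1 - P" using pc y2 y4 z2 z4 Pe by (simp add: power2_eq_square algebra_simps)
  moreover have "0 \<le> y*z" using y0 z0 by simp
  ultimately have "(y*z)^2 \<le> (1-P)^2" by (intro power_mono) auto
  moreover have "(y*z)^2 = (1-a)/m"
  proof -
    have "(y*z)^2 = x*r" using y2 z2 by (simp add: power_mult_distrib)
    also have "\<dots> = (1-a)/m" unfolding x_def r_def using k m0 by (simp add: field_simps)
    finally show ?thesis .
  qed
  ultimately have A: "(1-a)/m \<le> (1-P)^2" by simp
  have "m*m*((1-a)/m) \<le> m*m*(1-P)^2" using A m0 by (intro mult_left_mono) auto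
  moreover have "m*m*((1-a)/m) = m*(1-a)" using m0 by (simp add: field_simps)
  moreover have "(m*(1-P))^2 = m*m*(1-P)^2" by (simp add: power_mult_distrib power2_eq_square)
  ultimately have "m*(1-a) \<le> (m*(1-P))^2" by simp
  hence "(kk m a)^2 \<le> (m*(1-P))^2" using ka2 by simp
  moreover have "0 \<le> 1 - P" using \<open>y*z \<le> 1 - P\<close> \<open>0 \<le> y*z\<close> by linarith
  ultimately have "kk m a \<le> m*(1-P)" using m0 by (meson power2_le_imp_le mult_nonneg_nonneg less_imp_le)
  hence "P \<le> 1 - kk m a/m" using m0 by (simp add: field_simps)
  thus ?thesis unfolding P_def .
qed

definition A1n :: "real \<Rightarrow> real \<Rightarrow> real" where
  "A1n a k = (if 1 - a \<le> min 1 k then (min 1 k - (1 - a)) * (k - (min 1 k + (1 - a))/2) else 0)"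

definition A2n :: "real \<Rightarrow> real \<Rightarrow> real" where
  "A2n a b = ((1-b)^2 - (max 0 (1-a-b))^2)/2"

lemma main_ineq:
  assumes m: "4/3 \<le> m" "m \<le> 27/20" and a: "1/4 < a" "a < 1" and b: "1/4 < b" "b < 1"
  shows "(A1n a (kk m b) + A2n a b)/(kk m b)^2 \<le> 1 - kk m a/m"
proof -
  have m2: "m \<le> 2" using m by simp
  have a0: "0 < a" using a by simp
  have b0: "0 < b" using b by simp
  define k where "k = kk m b"
  have k0: "0 < k" and ke: "k^2 = m*(max k 1 - b)" and kb: "1 \<le> k + b"
    using kk_props[OF m(1) m2 b0 b(2)] k_def by auto
  have m0: "0 < m" using m by simp
  have plat: "a/m \<le> 1 - kk m a/m" using kk_plateau[OF m(1) m2 a0 a(2)] m0 by (simp add: field_simps)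
  have "(A1n a k + A2n a b)/k^2 \<le> 1 - kk m a/m" (is ?G)
  proof (cases "k \<le> 1")
    case True
    have k2: "k^2 = m*(1-b)" using ke True by (simp add: max_def)
    have red: "X/k^2 \<le> a/m" if "X \<le> a*(1-b)" for X
    proof -
      have "X/k^2 \<le> a*(1-b)/k^2" using that k0 by (intro divide_right_mono) auto
      also have "\<dots> = a/m" unfolding k2 using b m0 by (simp add: field_simps)
      finally show ?thesis .
    qed
    have A2le: "A2n a b \<le> a*(1-b)"
    proof (cases "1 - a - b \<le> 0")
      case True
      hence e: "A2n a b = (1-b)*(1-b)/2" unfolding A2n_def by (simp add: power2_eq_square)
      have f: "(1-b)*(1-b) \<le> a*(1-b)" using True b by (intro mult_right_mono) auto
      have "0 \<le> a*(1-b)" using a b by simp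
      thus ?thesis using e f by linarith
    next
      case False
      hence "A2n a b = a*(1-b) - a^2/2" unfolding A2n_def by (simp add: power2_eq_square field_simps; simp add: algebra_simps)
      thus ?thesis by simp
    qed
    show ?G
    proof (cases "k \<le> 1 - a")
      case True
      hence "A1n a k = 0" unfolding A1n_def using \<open>k \<le> 1\<close> by (auto simp: min_def)
      hence "(A1n a k + A2n a b)/k^2 \<le> a/m" using red A2le by simp
      thus ?G using plat by linarith
    next
      case False
      have A1e: "A1n a k = (k - (1-a))^2/2" unfolding A1n_def using False \<open>k \<le> 1\<close>
        by (simp add: min_def power2_eq_square field_simps; simp add: algebra_simps)
      show ?G
      proof (cases "a < 1 - b")
        case True
        have A2e: "A2n a b = a*(1-b) - a^2/2" unfolding A2n_def using True
          by (simp add: power2_eq_square field_simps; simp add: algebra_simps)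
        have "(k - (1-a))^2 \<le> a^2" using False \<open>k \<le> 1\<close> by (intro power_mono) auto
        hence "A1n a k + A2n a b \<le> a*(1-b)" using A1e A2e by simp
        hence "(A1n a k + A2n a b)/k^2 \<le> a/m" using red by simp
        thus ?G using plat by linarith
      next
        case ab: False
        have A2e: "A2n a b = (1-b)^2/2" unfolding A2n_def using ab by simp
        have "(A1n a k + A2n a b)/k^2 = ((k-(1-a))^2 + (1-b)^2)/(2*k^2)" unfolding A1e A2e by (simp add: add_divide_distrib)
        also have "\<dots> \<le> 1 - kk m a/m" using c4[OF m a k0 \<open>k \<le> 1\<close> k2] False ab by simp
        finally show ?G .
      qed
    qed
  next
    case False
    have k2: "k^2 = m*(k-b)" using ke False by (simp add: max_def)
    have A1e: "A1n a k = a*(k - (2-a)/2)" unfolding A1n_def using False a by (simp add: min_def)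
    show ?G
    proof (cases "a < 1 - b")
      case True
      have A2e: "A2n a b = a*(1-b) - a^2/2" unfolding A2n_def using True
        by (simp add: power2_eq_square field_simps; simp add: algebra_simps)
      have "A1n a k + A2n a b = a*(k-b)" unfolding A1e A2e by (simp add: power2_eq_square field_simps; simp add: algebra_simps)
      hence "(A1n a k + A2n a b)/k^2 = a/m" unfolding k2 using k0 k2 m0
        by (metis (no_types, lifting) divide_divide_eq_left' mult.commute nonzero_mult_div_cancel_left
            power2_eq_square zero_less_power2 less_numeral_extra(3) divide_eq_0_iff)
      thus ?G using plat by linarith
    next
      case ab: False
      have A2e: "A2n a b = (1-b)^2/2" unfolding A2n_def using ab by simp
      have "A1n a k + A2n a b = a*(k-b) + (a-(1-b))^2/2" unfolding A1e A2e
        by (simp add: power2_eq_square field_simps; simp add: algebra_simps)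
      thus ?G using c6[OF m a _ k2] False ab by simp
    qed
  qed
  thus ?thesis using k_def by simp
qed


abbreviation U :: "real \<Rightarrow> real measure" where "U k \<equiv> uniform_measure lborel {0..k}"

lemma U_prob: "0 < k \<Longrightarrow> prob_space (U k)"
  by (intro prob_space_uniform_measure) auto

lemma U_psf: "0 < k \<Longrightarrow> product_sigma_finite (\<lambda>_. U k)"
  unfolding product_sigma_finite_def
  using U_prob prob_space_imp_sigma_finite by blast

lemma U_measure: assumes "0 < k" "B \<in> sets borel"
  shows "measure (U k) B = measure lborel ({0..k} \<inter> B) / k"
  using assms by (subst measure_uniform_measure) auto

lemma ocean_single:
  assumes k: "0 < k"
  shows "ocean_shapley h a ({i}, k) i = measure (U k) {y. y < h \<and> h \<le> y + a i}"
proof -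
  interpret product_sigma_finite "\<lambda>_. U k" using U_psf[OF k] .
  define B where "B = {y::real. y < h \<and> h \<le> y + a i}"
  have B: "B \<in> sets (U k)" unfolding B_def by simp
  have "ocean_shapley h a ({i}, k) i = measure (PiM {i} (\<lambda>_. U k)) ((\<lambda>x. x i) -` B \<inter> space (PiM {i} (\<lambda>_. U k)))"
    unfolding ocean_shapley_def unif_positions_def B_def using k
    by (simp add: Int_def conj_commute)
  also have "\<dots> = measure (distr (PiM {i} (\<lambda>_. U k)) (U k) (\<lambda>x. x i)) B"
    using B by (subst measure_distr) (auto simp: measurable_component_singleton)
  also have "\<dots> = measure (U k) B" by (simp only: distr_singleton)
  finally show ?thesis unfolding B_def .
qed

lemma mlb_Icc: "l \<le> u \<Longrightarrow> measure lborel {l..u} = u - l"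
  by (simp add: measure_def)
lemma mlb_Ico: "l \<le> u \<Longrightarrow> measure lborel {l..<u} = u - (l::real)"
  by (simp add: measure_def)

lemma ocean_single_val:
  assumes k: "0 < k" and a: "0 < a i" "a i < h" "h - a i \<le> k"
  shows "ocean_shapley h a ({i}, k) i = (min h k - (h - a i))/k"
proof -
  have B: "{y::real. y < h \<and> h \<le> y + a i} \<in> sets borel" by measurable
  have "measure lborel ({0..k} \<inter> {y. y < h \<and> h \<le> y + a i}) = min h k - (h - a i)"
  proof (cases "k < h")
    case True
    hence "{0..k} \<inter> {y. y < h \<and> h \<le> y + a i} = {h - a i..k}" using a by auto
    thus ?thesis using True a by (simp add: mlb_Icc)
  next
    case False
    hence "{0..k} \<inter> {y. y < h \<and> h \<le> y + a i} = {h - a i..<h}" using a by auto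
    thus ?thesis using False a by (simp add: mlb_Ico)
  qed
  thus ?thesis using ocean_single[OF k] U_measure[OF k B] by simp
qed

definition cnd :: "real \<Rightarrow> real \<Rightarrow> real \<Rightarrow> real \<Rightarrow> real \<Rightarrow> bool" where
  "cnd h ai aj u v \<longleftrightarrow> (if v < u then aj else 0) + u < h \<and> h \<le> (if v < u then aj else 0) + u + ai"

lemma cnd_meas[measurable]: "Measurable.pred (borel \<Otimes>\<^sub>M borel) (\<lambda>(u,v). cnd h ai aj u v)"
  unfolding cnd_def by measurable

lemma ocean_pair_set:
  assumes ij: "i \<noteq> j" and k: "0 < k"
  shows "ocean_shapley h a (insert i {j}, k) i =
    measure (PiM (insert i {j}) (\<lambda>_. U k)) {x \<in> space (PiM (insert i {j}) (\<lambda>_. U k)). cnd h (a i) (a j) (x i) (x j)}"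
proof -
  have SS: "\<And>x. {l \<in> insert i {j} - {i}. x l < x i} = (if x j < x i then {j} else {})" using ij by auto
  have S: "\<And>x. (\<Sum>l\<in>{l \<in> insert i {j} - {i}. x l < x i}. a l) = (if x j < x i then a j else 0)"
    by (simp only: SS) simp
  show ?thesis unfolding ocean_shapley_def unif_positions_def
    by (simp only: fst_conv snd_conv if_P[OF k] S cnd_def)
qed

lemma pair_reduce:
  assumes ij: "i \<noteq> j" and k: "0 < k"
  shows "emeasure (PiM (insert i {j}) (\<lambda>_. U k)) {x \<in> space (PiM (insert i {j}) (\<lambda>_. U k)). cnd h ai aj (x i) (x j)}
    = (\<integral>\<^sup>+ y. emeasure (U k) {v. cnd h ai aj y v} \<partial>U k)"
proof -
  interpret product_sigma_finite "\<lambda>_. U k" using U_psf[OF k] .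
  define E where "E = {x \<in> space (PiM (insert i {j}) (\<lambda>_. U k)). cnd h ai aj (x i) (x j)}"
  have Em: "E \<in> sets (PiM (insert i {j}) (\<lambda>_. U k))"
  proof -
    have "(\<lambda>x. (x i, x j)) \<in> measurable (PiM (insert i {j}) (\<lambda>_. U k)) (borel \<Otimes>\<^sub>M borel)"
      by (intro measurable_Pair) (auto intro!: measurable_component_singleton)
    from measurable_compose[OF this cnd_meas[of h ai aj]]
    have "Measurable.pred (PiM (insert i {j}) (\<lambda>_. U k)) (\<lambda>x. cnd h ai aj (x i) (x j))" by simp
    thus ?thesis unfolding E_def pred_def .
  qed
  have "emeasure (PiM (insert i {j}) (\<lambda>_. U k)) E = (\<integral>\<^sup>+ x. indicator E x \<partial>PiM (insert i {j}) (\<lambda>_. U k))"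
    using Em by simp
  also have "\<dots> = (\<integral>\<^sup>+ y. (\<integral>\<^sup>+ x. indicator E (x(i := y)) \<partial>PiM {j} (\<lambda>_. U k)) \<partial>U k)"
    using ij Em by (subst product_nn_integral_insert_rev) auto
  also have "\<dots> = (\<integral>\<^sup>+ y. (\<integral>\<^sup>+ x. indicator {v. cnd h ai aj y v} (x j) \<partial>PiM {j} (\<lambda>_. U k)) \<partial>U k)"
  proof (intro nn_integral_cong)
    fix y x assume x: "x \<in> space (PiM {j} (\<lambda>_. U k))"
    have "x(i := y) \<in> space (PiM (insert i {j}) (\<lambda>_. U k))"
      using x ij by (auto simp: space_PiM PiE_def extensional_def)
    thus "indicator E (x(i := y)) = (indicator {v. cnd h ai aj y v} (x j) :: ennreal)"
      unfolding E_def using ij by (simp add: indicator_def)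
  qed
  also have "\<dots> = (\<integral>\<^sup>+ y. (\<integral>\<^sup>+ v. indicator {v. cnd h ai aj y v} v \<partial>U k) \<partial>U k)"
  proof (intro nn_integral_cong)
    fix y
    have "Measurable.pred borel (\<lambda>v. cnd h ai aj y v)"
      using measurable_Pair2[OF cnd_meas[of h ai aj], of y] by (simp add: measurable_cong_sets)
    hence "{v. cnd h ai aj y v} \<in> sets borel" by (simp add: pred_def)
    thus "(\<integral>\<^sup>+ x. indicator {v. cnd h ai aj y v} (x j) \<partial>PiM {j} (\<lambda>_. U k)) = (\<integral>\<^sup>+ v. indicator {v. cnd h ai aj y v} v \<partial>U k)"
      by (intro product_nn_integral_singleton) simp
  qed
  also have "\<dots> = (\<integral>\<^sup>+ y. emeasure (U k) {v. cnd h ai aj y v} \<partial>U k)"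
  proof (intro nn_integral_cong)
    fix y
    have "Measurable.pred borel (\<lambda>v. cnd h ai aj y v)"
      using measurable_Pair2[OF cnd_meas[of h ai aj], of y] by (simp add: measurable_cong_sets)
    hence "{v. cnd h ai aj y v} \<in> sets (U k)" by (simp add: pred_def)
    thus "(\<integral>\<^sup>+ v. indicator {v. cnd h ai aj y v} v \<partial>U k) = emeasure (U k) {v. cnd h ai aj y v}"
      by simp
  qed
  finally show ?thesis unfolding E_def .
qed

definition gfun :: "real \<Rightarrow> real \<Rightarrow> real \<Rightarrow> real \<Rightarrow> real \<Rightarrow> real" where
  "gfun h ai aj k y = (if aj + y < h \<and> h \<le> aj + y + ai then y else 0) + (if y < h \<and> h \<le> y + ai then k - y else 0)"

lemma inner_val:
  assumes k: "0 < k" and y: "0 \<le> y" "y \<le> k"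
  shows "emeasure (U k) {v. cnd h ai aj y v} = ennreal (gfun h ai aj k y / k)"
proof -
  interpret prob_space "U k" using U_prob[OF k] .
  have Bm: "{v. cnd h ai aj y v} \<in> sets borel"
    using measurable_Pair2[OF cnd_meas[of h ai aj], of y] by (simp add: measurable_cong_sets pred_def)
  have "measure lborel ({0..k} \<inter> {v. cnd h ai aj y v}) = gfun h ai aj k y"
  proof (cases "aj + y < h \<and> h \<le> aj + y + ai")
    case A: True
    show ?thesis
    proof (cases "y < h \<and> h \<le> y + ai")
      case B: True
      have "{0..k} \<inter> {v. cnd h ai aj y v} = {0..k}" using A B y by (auto simp: cnd_def)
      thus ?thesis unfolding gfun_def using A B y by (auto simp: mlb_Icc)
    next
      case B: False
      have "{0..k} \<inter> {v. cnd h ai aj y v} = {0..<y}" using A B y by (auto simp: cnd_def)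
      thus ?thesis unfolding gfun_def using A B y by (auto simp: mlb_Ico)
    qed
  next
    case A: False
    show ?thesis
    proof (cases "y < h \<and> h \<le> y + ai")
      case B: True
      have "{0..k} \<inter> {v. cnd h ai aj y v} = {y..k}" using A B y by (auto simp: cnd_def)
      thus ?thesis unfolding gfun_def using A B y by (auto simp: mlb_Icc)
    next
      case B: False
      have "{0..k} \<inter> {v. cnd h ai aj y v} = {}" using A B y by (auto simp: cnd_def)
      thus ?thesis unfolding gfun_def using A B y by auto
    qed
  qed
  hence "measure (U k) {v. cnd h ai aj y v} = gfun h ai aj k y / k" using U_measure[OF k Bm] by simp
  thus ?thesis using emeasure_eq_measure by simp
qed

lemma lin_integral:
  fixes p q c0 c1 :: real
  assumes "p \<le> q"
  shows "((\<lambda>y. c0 + c1*y) has_integral (c0*(q-p) + c1*(q^2-p^2)/2)) {p..q}"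
proof -
  have "((\<lambda>y. c0 + c1*y) has_integral ((c0*q + c1*q^2/2) - (c0*p + c1*p^2/2))) {p..q}"
  proof (rule fundamental_theorem_of_calculus[OF assms])
    fix x :: real assume "x \<in> {p..q}"
    have "((\<lambda>y. c0*y + c1*y^2/2) has_field_derivative (c0 + c1*x)) (at x within {p..q})"
      by (auto intro!: derivative_eq_intros simp: power2_eq_square algebra_simps)
    thus "((\<lambda>y. c0*y + c1*y^2/2) has_vector_derivative (c0 + c1*x)) (at x within {p..q})"
      by (simp add: has_real_derivative_iff_has_vector_derivative)
  qed
  moreover have "(c0*q + c1*q^2/2) - (c0*p + c1*p^2/2) = c0*(q-p) + c1*(q^2-p^2)/2"
    by (simp add: field_simps)
  ultimately show ?thesis by simp
qed

definition A1h :: "real \<Rightarrow> real \<Rightarrow> real \<Rightarrow> real" where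
  "A1h h ai k = (if h - ai \<le> min h k then (min h k - (h - ai)) * (k - (min h k + (h - ai))/2) else 0)"

definition A2h :: "real \<Rightarrow> real \<Rightarrow> real \<Rightarrow> real" where
  "A2h h ai aj = ((h - aj)^2 - (max 0 (h - ai - aj))^2)/2"

lemma piece1:
  assumes k: "0 < k" and ai: "0 < ai"
  shows "(\<integral>\<^sup>+ y. ennreal (indicator {h - ai..min h k} y * (1 + (-1/k)*y)) \<partial>lborel) = ennreal (A1h h ai k / k)"
proof (cases "h - ai \<le> min h k")
  case True
  have "((\<lambda>y. 1 + (-1/k)*y) has_integral (1*(min h k - (h-ai)) + (-1/k)*((min h k)^2 - (h-ai)^2)/2)) {h - ai..min h k}"
    by (rule lin_integral[OF True])
  moreover have "1*(min h k - (h-ai)) + (-1/k)*((min h k)^2 - (h-ai)^2)/2 = A1h h ai k / k"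
    unfolding A1h_def using True k by (simp add: field_simps power2_eq_square)
  ultimately have I: "((\<lambda>y. 1 + (-1/k)*y) has_integral (A1h h ai k / k)) {h - ai..min h k}" by simp
  have "\<And>y. y \<in> {h - ai..min h k} \<Longrightarrow> 0 \<le> 1 + (-1/k)*y" using k by (auto simp: field_simps)
  from nn_integral_has_integral_lebesgue[OF this I] show ?thesis .
next
  case False
  hence "{h - ai..min h k} = {}" by auto
  moreover have "A1h h ai k = 0" unfolding A1h_def using False by (simp only: if_not_P[OF False] if_False)
  ultimately show ?thesis by simp
qed

lemma piece2:
  assumes k: "0 < k" and ai: "0 < ai" and aj: "aj < h"
  shows "(\<integral>\<^sup>+ y. ennreal (indicator {max 0 (h - ai - aj)..h - aj} y * (0 + (1/k)*y)) \<partial>lborel) = ennreal (A2h h ai aj / k)"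
proof -
  have le: "max 0 (h - ai - aj) \<le> h - aj" using ai aj by simp
  have "((\<lambda>y. 0 + (1/k)*y) has_integral (0*(h - aj - max 0 (h - ai - aj)) + (1/k)*((h-aj)^2 - (max 0 (h - ai - aj))^2)/2)) {max 0 (h - ai - aj)..h - aj}"
    by (rule lin_integral[OF le])
  moreover have "0*(h - aj - max 0 (h - ai - aj)) + (1/k)*((h-aj)^2 - (max 0 (h - ai - aj))^2)/2 = A2h h ai aj / k"
    unfolding A2h_def using k by (simp add: field_simps)
  ultimately have I: "((\<lambda>y. 0 + (1/k)*y) has_integral (A2h h ai aj / k)) {max 0 (h - ai - aj)..h - aj}" by simp
  have "\<And>y. y \<in> {max 0 (h - ai - aj)..h - aj} \<Longrightarrow> 0 \<le> 0 + (1/k)*y" using k by auto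
  from nn_integral_has_integral_lebesgue[OF this I] show ?thesis .
qed

lemma outer_val:
  assumes k: "0 < k" and ai: "0 < ai" "ai < h" and aj: "0 < aj" "aj < h" and hk: "h - aj \<le> k"
  shows "(\<integral>\<^sup>+ y. emeasure (U k) {v. cnd h ai aj y v} \<partial>U k) = ennreal ((A1h h ai k + A2h h ai aj)/k^2)"
proof -
  define S1 where "S1 = {h - ai..min h k}"
  define S2 where "S2 = {max 0 (h - ai - aj)..h - aj}"
  have gm: "(\<lambda>y. ennreal (gfun h ai aj k y / k)) \<in> borel_measurable lborel"
    unfolding gfun_def by measurable
  have "(\<integral>\<^sup>+ y. emeasure (U k) {v. cnd h ai aj y v} \<partial>U k) = (\<integral>\<^sup>+ y. ennreal (gfun h ai aj k y / k) \<partial>U k)"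
    by (intro nn_integral_cong_AE AE_uniform_measureI) (auto intro!: AE_I2 inner_val[OF k] simp del: emeasure_uniform_measure)
  also have "\<dots> = (\<integral>\<^sup>+ y. ennreal (gfun h ai aj k y / k) * indicator {0..k} y \<partial>lborel) / emeasure lborel {0..k}"
    using gm by (subst nn_integral_uniform_measure) auto
  also have "(\<integral>\<^sup>+ y. ennreal (gfun h ai aj k y / k) * indicator {0..k} y \<partial>lborel) =
     (\<integral>\<^sup>+ y. ennreal (indicator S1 y * (1 + (-1/k)*y)) + ennreal (indicator S2 y * (0 + (1/k)*y)) \<partial>lborel)"
  proof (intro nn_integral_cong_AE)
    have "AE y in lborel. y \<noteq> h" by (rule AE_lborel_singleton)
    moreover have "AE y in lborel. y \<noteq> h - aj" by (rule AE_lborel_singleton)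
    ultimately show "AE y in lborel. ennreal (gfun h ai aj k y / k) * indicator {0..k} y =
       ennreal (indicator S1 y * (1 + (-1/k)*y)) + ennreal (indicator S2 y * (0 + (1/k)*y))"
    proof eventually_elim
      fix y assume y: "y \<noteq> h" "y \<noteq> h - aj"
      show "ennreal (gfun h ai aj k y / k) * indicator {0..k} y =
       ennreal (indicator S1 y * (1 + (-1/k)*y)) + ennreal (indicator S2 y * (0 + (1/k)*y))"
      proof (cases "y \<in> {0..k}")
        case False
        hence "y \<notin> S1" "y \<notin> S2" unfolding S1_def S2_def using ai hk by auto
        thus ?thesis using False by simp
      next
        case True
        have c1: "(y < h \<and> h \<le> y + ai) \<longleftrightarrow> y \<in> S1" unfolding S1_def using True y by (auto simp: min_def)
        have c2: "(aj + y < h \<and> h \<le> aj + y + ai) \<longleftrightarrow> y \<in> S2" unfolding S2_def using True y by (auto simp: max_def)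
        have e: "gfun h ai aj k y / k = indicator S1 y * (1 + (-1/k)*y) + indicator S2 y * (0 + (1/k)*y)"
        proof -
          have g: "gfun h ai aj k y = (if y \<in> S2 then y else 0) + (if y \<in> S1 then k - y else 0)"
            unfolding gfun_def c1 c2 ..
          have kk: "(k - y)/k = 1 + (-1/k)*y" using k by (simp add: field_simps)
          show ?thesis unfolding g using kk k
            by (cases "y \<in> S1"; cases "y \<in> S2") (simp_all add: indicator_def add_divide_distrib)
        qed
        have "0 \<le> 1 + (-1/k)*y" using True k by (simp add: field_simps)
        hence n1: "0 \<le> indicator S1 y * (1 + (-1/k)*y)" by (intro mult_nonneg_nonneg) auto
        have "0 \<le> 0 + (1/k)*y" using True k by simp
        hence n2: "0 \<le> indicator S2 y * (0 + (1/k)*y)" by (intro mult_nonneg_nonneg) auto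
        have "ennreal (gfun h ai aj k y / k) * indicator {0..k} y = ennreal (gfun h ai aj k y / k)"
          using True by simp
        also have "\<dots> = ennreal (indicator S1 y * (1 + (-1/k)*y)) + ennreal (indicator S2 y * (0 + (1/k)*y))"
          unfolding e using n1 n2 by (rule ennreal_plus)
        finally show ?thesis .
      qed
    qed
  qed
  also have "\<dots> = (\<integral>\<^sup>+ y. ennreal (indicator S1 y * (1 + (-1/k)*y)) \<partial>lborel) + (\<integral>\<^sup>+ y. ennreal (indicator S2 y * (0 + (1/k)*y)) \<partial>lborel)"
    unfolding S1_def S2_def by (rule nn_integral_add) (auto intro!: borel_measurable_indicator measurable_compose[OF _ measurable_ennreal] borel_measurable_times borel_measurable_add borel_measurable_const borel_measurable_continuous_onI continuous_intros)
  also have "\<dots> = ennreal (A1h h ai k / k) + ennreal (A2h h ai aj / k)"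
    unfolding S1_def S2_def using piece1[OF k ai(1)] piece2[OF k ai(1) aj(2)] by simp
  finally have "(\<integral>\<^sup>+ y. emeasure (U k) {v. cnd h ai aj y v} \<partial>U k) = (ennreal (A1h h ai k / k) + ennreal (A2h h ai aj / k)) / ennreal k"
    using k by simp
  moreover have A1: "0 \<le> A1h h ai k"
  proof (cases "h - ai \<le> min h k")
    case True
    have "0 \<le> min h k - (h - ai)" using True by simp
    moreover have "0 \<le> k - (min h k + (h - ai))/2"
    proof -
      obtain M where M: "M = min h k" by simp
      have "M \<le> k" "h - ai \<le> M" using M True by auto
      hence "0 \<le> k - (M + (h - ai))/2" by (simp add: field_simps)
      thus ?thesis using M by simp
    qed
    ultimately show ?thesis unfolding A1h_def using True by simp
  next
    case False thus ?thesis unfolding A1h_def by (simp only: if_not_P[OF False] if_False order_refl)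
  qed
  moreover have A2: "0 \<le> A2h h ai aj"
  proof -
    have "(max 0 (h - ai - aj))^2 \<le> (h - aj)^2" using ai aj by (intro power_mono) auto
    thus ?thesis unfolding A2h_def by simp
  qed
  ultimately show ?thesis using k
  proof -
    assume eq: "(\<integral>\<^sup>+ y. emeasure (U k) {v. cnd h ai aj y v} \<partial>U k) = (ennreal (A1h h ai k / k) + ennreal (A2h h ai aj / k)) / ennreal k"
    have x: "0 \<le> A1h h ai k / k" "0 \<le> A2h h ai aj / k" using A1 A2 k by auto
    have "ennreal (A1h h ai k / k) + ennreal (A2h h ai aj / k) = ennreal (A1h h ai k / k + A2h h ai aj / k)"
      using x by (rule ennreal_plus[symmetric])
    also have "\<dots> / ennreal k = ennreal ((A1h h ai k / k + A2h h ai aj / k) / k)"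
      using x k by (intro divide_ennreal) auto
    also have "(A1h h ai k / k + A2h h ai aj / k) / k = (A1h h ai k + A2h h ai aj)/k^2"
      using k by (simp add: power2_eq_square add_divide_distrib)
    finally show ?thesis using eq by simp
  qed
qed

lemma A1h_nonneg: assumes k: "0 < k" shows "0 \<le> A1h h ai k"
proof (cases "h - ai \<le> min h k")
  case True
  have "0 \<le> min h k - (h - ai)" using True by simp
  moreover have "0 \<le> k - (min h k + (h - ai))/2"
  proof -
    obtain M where M: "M = min h k" by simp
    have "M \<le> k" "h - ai \<le> M" using M True by auto
    hence "0 \<le> k - (M + (h - ai))/2" by (simp add: field_simps)
    thus ?thesis using M by simp
  qed
  ultimately show ?thesis unfolding A1h_def using True by simp
next
  case False thus ?thesis unfolding A1h_def by (simp only: if_not_P[OF False] if_False order_refl)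
qed

lemma A2h_nonneg: assumes "0 < ai" "0 < aj" "aj < h" shows "0 \<le> A2h h ai aj"
proof -
  have "(max 0 (h - ai - aj))^2 \<le> (h - aj)^2" using assms by (intro power_mono) auto
  thus ?thesis unfolding A2h_def by simp
qed

lemma ocean_pair_val:
  assumes ij: "i \<noteq> j" and k: "0 < k" and ai: "0 < a i" "a i < h" and aj: "0 < a j" "a j < h"
    and hk: "h - a j \<le> k"
  shows "ocean_shapley h a (insert i {j}, k) i = (A1h h (a i) k + A2h h (a i) (a j))/k^2"
proof -
  have e: "emeasure (PiM (insert i {j}) (\<lambda>_. U k)) {x \<in> space (PiM (insert i {j}) (\<lambda>_. U k)). cnd h (a i) (a j) (x i) (x j)}
     = ennreal ((A1h h (a i) k + A2h h (a i) (a j))/k^2)"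
    using pair_reduce[OF ij k] outer_val[OF k ai aj hk] by simp
  have nn: "0 \<le> (A1h h (a i) k + A2h h (a i) (a j))/k^2"
    using A1h_nonneg[OF k] A2h_nonneg[of "a i" "a j" h] ai aj by simp
  show ?thesis unfolding ocean_pair_set[OF ij k] measure_def e using nn by simp
qed


lemma min_scale: "0 < h \<Longrightarrow> min h (h*k) = h * min 1 (k::real)"
  by (simp add: min_def)
lemma max_scale: "0 < h \<Longrightarrow> max 0 (h*k) = h * max 0 (k::real)"
  by (simp add: max_def zero_le_mult_iff)

lemma scale_A1:
  assumes h: "0 < h"
  shows "A1h h (h*x) (h*k) = h^2 * A1n x k"
proof -
  have hx: "h - h*x = h*(1-x)" by (simp add: algebra_simps)
  have c: "(h - h*x \<le> min h (h*k)) \<longleftrightarrow> (1 - x \<le> min 1 k)"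
    unfolding min_scale[OF h] hx using h by (simp add: mult_le_cancel_left_pos)
  show ?thesis
  proof (cases "1 - x \<le> min 1 k")
    case True
    define M where "M = min 1 k"
    have t1: "h - h*x \<le> min h (h*k)" using c True by simp
    have "A1h h (h*x) (h*k) = (h*M - h*(1-x)) * (h*k - (h*M + h*(1-x))/2)"
      unfolding A1h_def using t1 unfolding min_scale[OF h] hx M_def by simp
    also have "\<dots> = h^2 * ((M - (1-x)) * (k - (M + (1-x))/2))"
      by (simp add: power2_eq_square field_simps)
    finally show ?thesis unfolding A1n_def M_def using True by simp
  next
    case False
    have f1: "\<not> (h - h*x \<le> min h (h*k))" using c False by simp
    show ?thesis unfolding A1h_def A1n_def by (simp only: if_not_P[OF f1] if_not_P[OF False])
  qed
qed

lemma scale_A2: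
  assumes h: "0 < h"
  shows "A2h h (h*x) (h*y) = h^2 * A2n x y"
proof -
  have e1: "h - h*x - h*y = h*(1-x-y)" by (simp add: algebra_simps)
  have e2: "h - h*y = h*(1-y)" by (simp add: algebra_simps)
  have "A2h h (h*x) (h*y) = ((h*(1-y))^2 - (h * max 0 (1-x-y))^2)/2"
    unfolding A2h_def e1 e2 max_scale[OF h] ..
  also have "\<dots> = h^2 * (((1-y)^2 - (max 0 (1-x-y))^2)/2)"
  proof -
    have "(h*(1-y))^2 - (h * max 0 (1-x-y))^2 = h^2*(1-y)^2 - h^2*(max 0 (1-x-y))^2"
      by (simp only: power_mult_distrib)
    also have "\<dots> = h^2 * ((1-y)^2 - (max 0 (1-x-y))^2)"
      by (simp only: right_diff_distrib)
    finally have "(h*(1-y))^2 - (h * max 0 (1-x-y))^2 = h^2 * ((1-y)^2 - (max 0 (1-x-y))^2)" .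
    thus ?thesis by simp
  qed
  finally show ?thesis unfolding A2n_def .
qed

lemma own_pay:
  assumes h: "0 < h" and m: "4/3 \<le> m" "m \<le> 27/20" and ai: "h/4 < a i" "a i < h"
  shows "ocean_shapley h a ({i}, h * kk m (a i/h)) i = 1 - kk m (a i/h)/m"
proof -
  define x where "x = a i/h"
  have x: "0 < x" "x < 1" using ai h unfolding x_def by (auto simp: field_simps)
  have m2: "m \<le> 2" using m by simp
  note P = kk_props[OF m(1) m2 x]
  define c where "c = kk m x"
  have ax: "a i = h*x" unfolding x_def using h by simp
  have "h*1 \<le> h*(c + x)" using P(3) h c_def by (intro mult_left_mono) auto
  hence "h - a i \<le> h*c" unfolding ax by (simp add: algebra_simps)
  hence "ocean_shapley h a ({i}, h*c) i = (min h (h*c) - (h - a i))/(h*c)"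
    using ocean_single_val[of "h*c" a i h] P(1) h ai c_def by simp
  also have "\<dots> = (min 1 c - (1 - x))/c"
    unfolding min_scale[OF h] ax using h P(1) c_def by (simp add: field_simps)
  also have "\<dots> = 1 - c/m"
  proof -
    have "c^2 = m*(max c 1 - x)" using P(2) c_def by simp
    hence "c^2/m = max c 1 - x" using m by (simp add: field_simps)
    moreover have "max c 1 + min 1 c = c + 1" by (simp add: max_def min_def)
    ultimately have "c^2/m = c - (min 1 c - (1 - x))" by linarith
    thus ?thesis using P(1) c_def m by (simp add: field_simps power2_eq_square)
  qed
  finally show ?thesis unfolding c_def x_def .
qed

lemma dev_nonatomic:
  assumes h: "0 < h" and m: "1 \<le> m" and ai: "0 < a i" "a i < h"
  shows "ocean_shapley h a ({i}, h*m) i = (a i/h)/m"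
proof -
  have "h*1 \<le> h*m" using h m by (intro mult_left_mono) auto
  hence "h \<le> h*m" by simp
  hence "h - a i \<le> h*m" using ai by linarith
  hence "ocean_shapley h a ({i}, h*m) i = (min h (h*m) - (h - a i))/(h*m)"
    using ocean_single_val[of "h*m" a i h] h m ai by simp
  also have "min h (h*m) = h" using h m by (simp add: min_def)
  finally show ?thesis by simp
qed

lemma dev_pair:
  assumes h: "0 < h" and m: "4/3 \<le> m" "m \<le> 27/20" and ij: "i \<noteq> j"
    and ai: "h/4 < a i" "a i < h" and aj: "h/4 < a j" "a j < h"
  shows "ocean_shapley h a (insert i {j}, h * kk m (a j/h)) i =
     (A1n (a i/h) (kk m (a j/h)) + A2n (a i/h) (a j/h)) / (kk m (a j/h))^2"
proof -
  define x where "x = a i/h"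
  define y where "y = a j/h"
  have y: "0 < y" "y < 1" using aj h unfolding y_def by (auto simp: field_simps)
  have m2: "m \<le> 2" using m by simp
  note P = kk_props[OF m(1) m2 y]
  define c where "c = kk m y"
  have ax: "a i = h*x" unfolding x_def using h by simp
  have ay: "a j = h*y" unfolding y_def using h by simp
  have "h*1 \<le> h*(c + y)" using P(3) h c_def by (intro mult_left_mono) auto
  hence hk: "h - a j \<le> h*c" unfolding ay by (simp add: algebra_simps)
  have "ocean_shapley h a (insert i {j}, h*c) i = (A1h h (a i) (h*c) + A2h h (a i) (a j))/(h*c)^2"
    using ocean_pair_val[of i j "h*c" a h, OF ij _ _ _ _ _ hk] P(1) h ai aj c_def by simp
  also have "\<dots> = (h^2 * A1n x c + h^2 * A2n x y)/(h^2*c^2)"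
    unfolding ax ay scale_A1[OF h] scale_A2[OF h] by (simp add: power_mult_distrib)
  also have "\<dots> = (A1n x c + A2n x y)/c^2" using h P(1) c_def by (simp add: field_simps)
  finally show ?thesis unfolding c_def x_def y_def .
qed

lemma kk_cont:
  assumes x: "0 < x" "x < 1"
  shows "continuous_on {4/3..27/20} (\<lambda>m. kk m x)"
proof -
  define S1 where "S1 = {4/3..27/20} \<inter> {m::real. m*(1-x) \<le> 1}"
  define S2 where "S2 = {4/3..27/20} \<inter> {m::real. 1 \<le> m*(1-x)}"
  have "closed {m::real. m*(1-x) \<le> 1}" by (intro closed_Collect_le continuous_intros)
  hence c1: "closed S1" unfolding S1_def by (intro closed_Int) auto
  have "closed {m::real. 1 \<le> m*(1-x)}" by (intro closed_Collect_le continuous_intros)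
  hence c2: "closed S2" unfolding S2_def by (intro closed_Int) auto
  have u: "S1 \<union> S2 = {4/3..27/20}" unfolding S1_def S2_def by auto
  have "continuous_on (S1 \<union> S2) (\<lambda>m. if m*(1-x) \<le> 1 then sqrt (m*(1-x)) else (m + sqrt (m^2 - 4*m*x))/2)"
  proof (rule continuous_on_cases[OF c1 c2])
    show "continuous_on S1 (\<lambda>m. sqrt (m*(1-x)))" by (intro continuous_intros)
    show "continuous_on S2 (\<lambda>m. (m + sqrt (m^2 - 4*m*x))/2)" by (intro continuous_intros) auto
    show "\<forall>m. m \<in> S1 \<and> \<not> m*(1-x) \<le> 1 \<or> m \<in> S2 \<and> m*(1-x) \<le> 1 \<longrightarrow>
        sqrt (m*(1-x)) = (m + sqrt (m^2 - 4*m*x))/2"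
    proof (intro allI impI)
      fix m assume "m \<in> S1 \<and> \<not> m*(1-x) \<le> 1 \<or> m \<in> S2 \<and> m*(1-x) \<le> 1"
      hence e: "m*(1-x) = 1" and mm: "m \<le> 27/20" unfolding S1_def S2_def by auto
      have "m^2 - 4*m*x = (2 - m)^2" using e by (simp add: power2_eq_square algebra_simps)
      hence "sqrt (m^2 - 4*m*x) = 2 - m" using mm by simp
      thus "sqrt (m*(1-x)) = (m + sqrt (m^2 - 4*m*x))/2" using e by simp
    qed
  qed
  thus ?thesis unfolding u kk_def by simp
qed

lemma std_single:
  assumes h: "0 < h" and ai: "a i < h"
  shows "ocean_shapley h a ({i}, 0) i = 0"
proof -
  have "ocean_shapley h a ({i}, 0) i = std_shapley h a {i} i" unfolding ocean_shapley_def by simp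
  also have "\<dots> = 0" unfolding std_shapley_def rho_atomic_def using h ai by simp
  finally show ?thesis .
qed


lemma stake_sum:
  assumes P: "is_partition n L Ps"
  shows "(\<Sum>j<length Ps. stake a (Ps!j)) = L + (\<Sum>i\<in>{1..n}. a i)"
proof -
  have fin: "\<And>j. j < length Ps \<Longrightarrow> finite (fst (Ps!j))"
    using P unfolding is_partition_def by (meson finite_atLeastAtMost finite_subset)
  have "(\<Sum>j<length Ps. stake a (Ps!j)) = (\<Sum>j<length Ps. snd (Ps!j)) + (\<Sum>j<length Ps. (\<Sum>i\<in>fst (Ps!j). a i))"
    unfolding stake_def by (simp add: sum.distrib)
  also have "(\<Sum>j<length Ps. snd (Ps!j)) = L" using P unfolding is_partition_def by simp
  also have "(\<Sum>j<length Ps. (\<Sum>i\<in>fst (Ps!j). a i)) = (\<Sum>i\<in>(\<Union>j<length Ps. fst (Ps!j)). a i)"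
    by (rule sum.UNION_disjoint[symmetric]) (use fin P in \<open>auto simp: is_partition_def\<close>)
  also have "(\<Union>j<length Ps. fst (Ps!j)) = {1..n}" using P unfolding is_partition_def by simp
  finally show ?thesis .
qed

lemma opt_le:
  assumes h: "0 < h" and P0: "is_partition n L Ps0" "\<forall>P\<in>set Ps0. h \<le> stake a P"
  shows "real (OPT h n a L) * h \<le> L + (\<Sum>i\<in>{1..n}. a i)"
proof -
  define T where "T = {t. \<exists>Ps. is_partition n L Ps \<and> length Ps = t \<and> (\<forall>P\<in>set Ps. stake a P \<ge> h)}"
  have bnd: "real t * h \<le> L + (\<Sum>i\<in>{1..n}. a i)" if tT: "t \<in> T" for t
  proof -
    obtain Ps where Ps: "is_partition n L Ps" "length Ps = t" "\<forall>P\<in>set Ps. stake a P \<ge> h"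
      using tT unfolding T_def by blast
    have "real (card {..<length Ps}) * h \<le> (\<Sum>j<length Ps. stake a (Ps!j))"
      by (rule sum_bounded_below) (use Ps in auto)
    thus ?thesis using stake_sum[OF Ps(1), of a] Ps(2) by simp
  qed
  have fin: "finite T"
  proof (rule finite_subset)
    show "T \<subseteq> {..nat \<lceil>(L + (\<Sum>i\<in>{1..n}. a i))/h\<rceil>}"
    proof
      fix t assume "t \<in> T"
      hence "real t * h \<le> L + (\<Sum>i\<in>{1..n}. a i)" by (rule bnd)
      hence "real t \<le> (L + (\<Sum>i\<in>{1..n}. a i))/h" using h by (simp add: field_simps)
      hence "real t \<le> of_int \<lceil>(L + (\<Sum>i\<in>{1..n}. a i))/h\<rceil>" using le_of_int_ceiling order_trans by blast
      hence "int t \<le> \<lceil>(L + (\<Sum>i\<in>{1..n}. a i))/h\<rceil>" by linarith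
      thus "t \<in> {..nat \<lceil>(L + (\<Sum>i\<in>{1..n}. a i))/h\<rceil>}" by simp
    qed
  qed simp
  have ne: "length Ps0 \<in> T" unfolding T_def using P0 by auto
  have "OPT h n a L \<in> T" unfolding OPT_def T_def[symmetric] using fin ne by (intro Max_in) auto
  thus ?thesis by (rule bnd)
qed

definition Pn :: "real \<Rightarrow> (nat \<Rightarrow> real) \<Rightarrow> nat \<Rightarrow> real \<Rightarrow> nat \<Rightarrow> pool" where
  "Pn h a n m j = (if j < n then ({j+1}, h * kk m (a (j+1)/h)) else ({}, h*m))"

lemma atomic_facts:
  assumes h: "0 < h" and m: "4/3 \<le> m" "m \<le> 27/20" and ai: "h/4 < a i" "a i < h"
  shows "0 < h * kk m (a i/h)" "h \<le> h * kk m (a i/h) + a i" "h * kk m (a i/h) + a i \<le> h*m"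
    "ocean_shapley h a ({i}, h * kk m (a i/h)) i = 1 - kk m (a i/h)/m"
    "(a i/h)/m \<le> 1 - kk m (a i/h)/m"
    "nonatomic_unit h a ({i}, h * kk m (a i/h)) = 1/(h*m)"
proof -
  define x where "x = a i/h"
  have x: "0 < x" "x < 1" using ai h unfolding x_def by (auto simp: field_simps)
  have m2: "m \<le> 2" using m by simp
  note P = kk_props[OF m(1) m2 x]
  note Q = kk_plateau[OF m(1) m2 x]
  have ax: "a i = h*x" unfolding x_def using h by simp
  show p1: "0 < h * kk m (a i/h)" using P(1) h x_def by simp
  have "h*1 \<le> h*(kk m x + x)" using P(3) h by (intro mult_left_mono) auto
  thus p2: "h \<le> h * kk m (a i/h) + a i" unfolding ax x_def[symmetric] by (simp add: algebra_simps)
  have "h*(kk m x + x) \<le> h*m" using Q h by (intro mult_left_mono) auto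
  thus "h * kk m (a i/h) + a i \<le> h*m" unfolding ax x_def[symmetric] by (simp add: algebra_simps)
  show own: "ocean_shapley h a ({i}, h * kk m (a i/h)) i = 1 - kk m (a i/h)/m"
    by (rule own_pay[of h m a i, OF h m ai])
  show "(a i/h)/m \<le> 1 - kk m (a i/h)/m" using Q m unfolding x_def[symmetric] by (simp add: field_simps)
  have rew: "pool_reward h a ({i}, h * kk m (a i/h)) = 1" unfolding pool_reward_def stake_def using p2 by simp
  show "nonatomic_unit h a ({i}, h * kk m (a i/h)) = 1/(h*m)"
  proof -
    have "nonatomic_unit h a ({i}, h * kk m (a i/h)) = (1 - (1 - kk m (a i/h)/m)) / (h * kk m (a i/h))"
      unfolding nonatomic_unit_def rew by (simp add: own)
    also have "\<dots> = 1/(h*m)" using P(1) m h unfolding x_def by (simp add: field_simps)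
    finally show ?thesis .
  qed
qed

lemma nonatomic_pool_facts:
  assumes h: "0 < h" and m: "1 \<le> m"
  shows "nonatomic_unit h a ({}, h*m) = 1/(h*m)" "h \<le> stake a ({}, h*m)"
proof -
  have "h*1 \<le> h*m" using h m by (intro mult_left_mono) auto
  thus s: "h \<le> stake a ({}, h*m)" unfolding stake_def by simp
  show "nonatomic_unit h a ({}, h*m) = 1/(h*m)"
    unfolding nonatomic_unit_def pool_reward_def using s by (simp add: stake_def)
qed

lemma construct:
  assumes h: "0 < h" and m: "4/3 \<le> m" "m \<le> 27/20"
    and A: "\<forall>i\<in>{1..n}. h/4 < a i \<and> a i < h"
    and L: "L = h*(real t*m + (\<Sum>p<n. kk m (a (p+1)/h)))"
  shows "shapley_NE h n a L (map (Pn h a n m) [0..<n+t])"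
    "num_winning h a (map (Pn h a n m) [0..<n+t]) = n + t"
    "real (OPT h n a L) \<le> real (n+t) * m"
proof -
  define Ps where "Ps = map (Pn h a n m) [0..<n+t]"
  have lenP: "length Ps = n + t" unfolding Ps_def by simp
  have PsJ: "\<And>j. j < length Ps \<Longrightarrow> Ps!j = Pn h a n m j" unfolding Ps_def by simp
  have m1: "1 \<le> m" using m by simp
  have Ai: "h/4 < a (j+1)" "a (j+1) < h" if "j < n" for j using A that by auto
  have AF: "0 < h * kk m (a (j+1)/h)" "h \<le> h * kk m (a (j+1)/h) + a (j+1)"
    "h * kk m (a (j+1)/h) + a (j+1) \<le> h*m" "True" "True"
    "nonatomic_unit h a ({j+1}, h * kk m (a (j+1)/h)) = 1/(h*m)" if "j < n" for j
    using atomic_facts[of h m a "j+1", OF h m Ai[OF that]] by auto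
  note NF = nonatomic_pool_facts[OF h m1]
  have win: "h \<le> stake a (Pn h a n m j)" for j
  proof (cases "j < n")
    case True thus ?thesis unfolding Pn_def stake_def using AF(2)[OF True] by simp
  next
    case False thus ?thesis unfolding Pn_def using NF(2) by simp
  qed
  have stle: "stake a (Pn h a n m j) \<le> h*m" for j
  proof (cases "j < n")
    case True thus ?thesis unfolding Pn_def stake_def using AF(3)[OF True] by simp
  next
    case False thus ?thesis unfolding Pn_def stake_def by simp
  qed
  have unit: "nonatomic_unit h a (Pn h a n m j) = 1/(h*m)" for j
  proof (cases "j < n")
    case True thus ?thesis unfolding Pn_def using AF(6)[OF True] by simp
  next
    case False thus ?thesis unfolding Pn_def using NF(1) by simp
  qed
  have snd_sum: "(\<Sum>j<n+t'. snd (Pn h a n m j)) = (\<Sum>p<n. h * kk m (a (p+1)/h)) + real t' * (h*m)" for t'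
  proof (induction t')
    case 0 thus ?case unfolding Pn_def by simp
  next
    case (Suc t') thus ?case unfolding Pn_def by (simp add: algebra_simps)
  qed
  have part: "is_partition n L Ps"
    unfolding is_partition_def lenP
  proof (intro conjI allI impI)
    fix j assume j: "j < n + t"
    show "fst (Ps!j) \<subseteq> {1..n}" using PsJ j lenP unfolding Pn_def by (auto split: if_splits)
    show "0 \<le> snd (Ps!j)"
    proof (cases "j < n")
      case True thus ?thesis using PsJ j lenP AF(1)[OF True] unfolding Pn_def by simp
    next
      case False thus ?thesis using PsJ j lenP h m unfolding Pn_def by simp
    qed
    show "fst (Ps!j) \<noteq> {} \<or> 0 < snd (Ps!j)" using PsJ j lenP h m unfolding Pn_def by (auto split: if_splits)
  next
    fix i j assume "i < n + t" "j < n + t" "i \<noteq> j"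
    thus "fst (Ps!i) \<inter> fst (Ps!j) = {}" using PsJ lenP unfolding Pn_def by (auto split: if_splits)
  next
    show "(\<Union>j<n+t. fst (Ps!j)) = {1..n}"
    proof
      show "(\<Union>j<n+t. fst (Ps!j)) \<subseteq> {1..n}" using PsJ lenP unfolding Pn_def by (auto split: if_splits)
      show "{1..n} \<subseteq> (\<Union>j<n+t. fst (Ps!j))"
      proof
        fix i assume i: "i \<in> {1..n}"
        hence "i - 1 < n + t" "Ps!(i-1) = Pn h a n m (i-1)" using PsJ lenP by auto
        moreover have "i \<in> fst (Pn h a n m (i-1))" using i unfolding Pn_def by auto
        ultimately show "i \<in> (\<Union>j<n+t. fst (Ps!j))" by (intro UN_I[of "i-1"]) auto
      qed
    qed
  next
    have "(\<Sum>j<n+t. snd (Ps!j)) = (\<Sum>j<n+t. snd (Pn h a n m j))" using PsJ lenP by simp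
    also have "\<dots> = L" unfolding snd_sum L by (simp add: sum_distrib_left algebra_simps)
    finally show "(\<Sum>j<n+t. snd (Ps!j)) = L" .
  qed
  have winall: "\<forall>p<length Ps. winning h a (Ps!p)" using PsJ win unfolding winning_def by simp
  show NE: "shapley_NE h n a L Ps"
    unfolding shapley_NE_def
  proof (intro conjI part winall allI impI ballI)
    fix p i assume p: "p < length Ps" and i: "i \<in> fst (Ps!p)"
    have pn: "p < n" and ip: "i = p + 1" using i PsJ[OF p] unfolding Pn_def by (auto split: if_splits)
    have Psp: "Ps!p = ({i}, h * kk m (a i/h))" using PsJ[OF p] pn ip unfolding Pn_def by simp
    have aih: "h/4 < a i" "a i < h" using Ai[OF pn] ip by auto
    note AFi = atomic_facts[of h m a i, OF h m aih]
    have own0: "0 \<le> ocean_shapley h a (Ps!p) i" unfolding Psp AFi(4) using AFi(5) aih h m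
      by (smt (verit) divide_nonneg_nonneg)
    show "ocean_shapley h a ({i}, 0) i \<le> ocean_shapley h a (Ps!p) i"
      using std_single[of h a i, OF h aih(2)] own0 by simp
    fix q assume q: "q < length Ps" "q \<noteq> p"
    show "ocean_shapley h a (insert i (fst (Ps!q)), snd (Ps!q)) i \<le> ocean_shapley h a (Ps!p) i"
    proof (cases "q < n")
      case True
      define j where "j = q + 1"
      have Psq: "Ps!q = ({j}, h * kk m (a j/h))" using PsJ[OF q(1)] True unfolding Pn_def j_def by simp
      have ij: "i \<noteq> j" using q ip j_def by simp
      have ajh: "h/4 < a j" "a j < h" using Ai[OF True] j_def by auto
      have x: "1/4 < a i/h" "a i/h < 1" "1/4 < a j/h" "a j/h < 1" using aih ajh h by (auto simp: field_simps)
      have "ocean_shapley h a (insert i {j}, h * kk m (a j/h)) i =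
         (A1n (a i/h) (kk m (a j/h)) + A2n (a i/h) (a j/h)) / (kk m (a j/h))^2"
        by (rule dev_pair[of h m i j a, OF h m ij aih ajh])
      also have "\<dots> \<le> 1 - kk m (a i/h)/m" by (rule main_ineq[OF m x])
      finally show ?thesis unfolding Psq Psp AFi(4) by simp
    next
      case False
      have Psq: "Ps!q = ({}, h*m)" using PsJ[OF q(1)] False unfolding Pn_def by simp
      have "ocean_shapley h a ({i}, h*m) i = (a i/h)/m" using dev_nonatomic[of h m a i, OF h m1] aih h by simp
      thus ?thesis unfolding Psq Psp AFi(4) using AFi(5) by simp
    qed
  next
    fix p q assume p: "p < length Ps" and "0 < snd (Ps!p)" and q: "q < length Ps" "q \<noteq> p"
    show "nonatomic_unit h a (Ps!q) \<le> nonatomic_unit h a (Ps!p)" using PsJ[OF p] PsJ[OF q(1)] unit by simp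
  qed
  have "filter (winning h a) Ps = Ps" using winall by (simp add: filter_id_conv all_set_conv_all_nth)
  thus W: "num_winning h a Ps = n + t" unfolding num_winning_def using lenP by simp
  have "real (OPT h n a L) * h \<le> L + (\<Sum>i\<in>{1..n}. a i)"
    using opt_le[OF h part] winall unfolding winning_def by (simp add: all_set_conv_all_nth)
  also have "\<dots> = (\<Sum>j<length Ps. stake a (Ps!j))" using stake_sum[OF part] by simp
  also have "\<dots> \<le> (\<Sum>j<length Ps. h*m)" using PsJ stle by (intro sum_mono) simp
  also have "\<dots> = real (n+t) * m * h" using lenP by simp
  finally show "real (OPT h n a L) \<le> real (n+t) * m" using h by simp
qed


theorem theorem3p4:
  fixes h \<epsilon> S :: real
  assumes "h > 0" and "\<epsilon> > 0"
  shows "\<exists>L0. \<forall>(n::nat) (a::nat \<Rightarrow> real).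
           (\<forall>i\<in>{1..n}. h / 4 < a i \<and> a i < h) \<and> (\<Sum>i=1..n. a i) = S \<longrightarrow>
           (\<forall>L::real. L \<ge> L0 \<longrightarrow>
              {Ps. shapley_NE h n a L Ps} \<noteq> {} \<and>
              price_of_stability h n a L \<le> 4/3 + \<epsilon>)"
proof -
  have h: "0 < h" using assms by simp
  define M0 where "M0 = (4/3::real)"
  define M1 where "M1 = min (27/20) (4/3 + \<epsilon>)"
  have M0M1: "M0 < M1" unfolding M0_def M1_def using assms by simp
  have M1b: "M1 \<le> 27/20" "M1 \<le> 4/3 + \<epsilon>" unfolding M1_def by (simp_all add: min_def)
  have M0p: "0 < M0" unfolding M0_def by simp
  have dpos: "0 < 1 - M0/M1" using M0M1 M0p by (simp add: field_simps)
  define C where "C = h*M0 + 4*\<bar>S\<bar>*M0"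
  have C0: "0 \<le> C" unfolding C_def using h M0p by simp
  define L0 where "L0 = C/(1 - M0/M1) + 1"
  have L01: "1 \<le> L0" unfolding L0_def using C0 dpos by simp
  show ?thesis
  proof (intro exI[of _ L0] allI impI)
    fix n :: nat and a :: "nat \<Rightarrow> real" and L :: real
    assume H: "(\<forall>i\<in>{1..n}. h / 4 < a i \<and> a i < h) \<and> (\<Sum>i=1..n. a i) = S"
    assume L: "L0 \<le> L"
    have A: "\<forall>i\<in>{1..n}. h / 4 < a i \<and> a i < h" and Ssum: "(\<Sum>i=1..n. a i) = S" using H by auto
    have Lpos: "0 < L" using L L01 by simp
    have "(\<Sum>i=1..n. h/4) \<le> (\<Sum>i=1..n. a i)"
    proof (intro sum_mono)
      fix i assume "i \<in> {1..n}"
      thus "h/4 \<le> a i" using A by (meson less_imp_le)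
    qed
    hence nS: "real n * h \<le> 4*\<bar>S\<bar>" using Ssum by simp
    define t where "t = nat \<lceil>L/(h*M1)\<rceil>"
    have hM1: "0 < h*M1" using h M0M1 M0p by simp
    have t1: "L/(h*M1) \<le> real t" unfolding t_def by linarith
    have q0: "0 < L/(h*M1)" using Lpos hM1 by simp
    hence "0 \<le> \<lceil>L/(h*M1)\<rceil>" by simp
    hence "real t = of_int \<lceil>L/(h*M1)\<rceil>" unfolding t_def by simp
    hence t2: "real t \<le> L/(h*M1) + 1" using of_int_ceiling_le_add_one[of "L/(h*M1)"] by simp
    have tpos: "0 < t" using Lpos hM1 t1 by (auto intro!: Nat.gr0I simp: field_simps)
    have x: "0 < a (p+1)/h" "a (p+1)/h < 1" if "p < n" for p
    proof -
      have "p+1 \<in> {1..n}" using that by simp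
      hence "h/4 < a (p+1)" "a (p+1) < h" using A by auto
      thus "0 < a (p+1)/h" "a (p+1)/h < 1" using h by (auto simp: field_simps)
    qed
    define F where "F = (\<lambda>m. h*(real t*m + (\<Sum>p<n. kk m (a (p+1)/h))))"
    have sub: "{M0..M1} \<subseteq> {4/3..27/20}" using M1b unfolding M0_def by auto
    have cont: "continuous_on {M0..M1} F" unfolding F_def
      by (intro continuous_intros continuous_on_sum ballI continuous_on_subset[OF kk_cont sub]) (use x in auto)
    have kk0: "0 \<le> kk m (a (p+1)/h)" if "p < n" "4/3 \<le> m" "m \<le> 2" for p m
      using kk_props(1)[OF that(2,3) x[OF that(1)]] by simp
    have "L \<le> h*(real t*M1)" using t1 hM1 by (simp add: field_simps)
    moreover have "0 \<le> (\<Sum>p<n. kk M1 (a (p+1)/h))" using kk0 M0M1 M1b unfolding M0_def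
      by (intro sum_nonneg) auto
    moreover have "0 \<le> h * (\<Sum>p<n. kk M1 (a (p+1)/h))"
      using calculation(2) h by simp
    ultimately have FM1: "L \<le> F M1" unfolding F_def by (simp add: distrib_left)
    have "(\<Sum>p<n. kk M0 (a (p+1)/h)) \<le> (\<Sum>p<n. M0)"
    proof (intro sum_mono)
      fix p assume "p \<in> {..<n}"
      hence p: "p < n" by simp
      have "kk M0 (a (p+1)/h) + a (p+1)/h \<le> M0"
        using kk_plateau[of M0 "a (p+1)/h"] x[OF p] unfolding M0_def by simp
      thus "kk M0 (a (p+1)/h) \<le> M0" using x[OF p] by simp
    qed
    hence "F M0 \<le> h*(real t*M0 + real n*M0)" unfolding F_def using h by simp
    also have "\<dots> \<le> h*((L/(h*M1) + 1)*M0 + real n*M0)" using t2 h M0p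
      by (intro mult_left_mono add_right_mono mult_right_mono) auto
    also have "\<dots> = L*(M0/M1) + h*M0 + (real n*h)*M0" using h hM1 by (simp add: field_simps)
    also have "\<dots> \<le> L*(M0/M1) + C" unfolding C_def using nS M0p by (simp add: mult_right_mono)
    also have "\<dots> \<le> L"
    proof -
      have "C/(1 - M0/M1) \<le> L" using L unfolding L0_def by simp
      hence "C \<le> L*(1 - M0/M1)" using dpos by (simp add: field_simps)
      thus ?thesis by (simp add: algebra_simps)
    qed
    finally have FM0: "F M0 \<le> L" .
    obtain m where m: "M0 \<le> m" "m \<le> M1" "F m = L"
      using IVT'[of F M0 L M1, OF FM0 FM1 _ cont] M0M1 by auto
    have mb: "4/3 \<le> m" "m \<le> 27/20" using m M1b unfolding M0_def by auto
    have Leq: "L = h*(real t*m + (\<Sum>p<n. kk m (a (p+1)/h)))" using m(3) unfolding F_def by simp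
    note CO = construct[OF h mb A Leq]
    define Ps where "Ps = map (Pn h a n m) [0..<n+t]"
    have NE: "shapley_NE h n a L Ps" using CO(1) Ps_def by simp
    have W: "num_winning h a Ps = n + t" using CO(2) Ps_def by simp
    have npos: "0 < real (n + t)" using tpos by simp
    have ratio: "real (OPT h n a L) / real (num_winning h a Ps) \<le> m"
      unfolding W using CO(3) npos by (simp add: field_simps)
    have "price_of_stability h n a L \<le> real (OPT h n a L) / real (num_winning h a Ps)"
      unfolding price_of_stability_def
    proof (rule cInf_lower)
      show "real (OPT h n a L) / real (num_winning h a Ps) \<in> {real (OPT h n a L) / real (num_winning h a Ps) |Ps. shapley_NE h n a L Ps}"
        using NE by auto
      show "bdd_below {real (OPT h n a L) / real (num_winning h a Ps) |Ps. shapley_NE h n a L Ps}"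
        by (rule bdd_belowI[of _ 0]) auto
    qed
    also have "\<dots> \<le> 4/3 + \<epsilon>" using ratio m M1b by simp
    finally show "{Ps. shapley_NE h n a L Ps} \<noteq> {} \<and> price_of_stability h n a L \<le> 4/3 + \<epsilon>"
      using NE by auto
  qed
qed


end
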